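(* Let $a,d\in\mathbb{N}$ and $m,n\in\mathbb{N}$ with $m,n\ge 2$. Let $X_1,\dots,X_m$ be i.i.d. random variables uniformly distributed on $\{1,\dots,a\}$ and $Y_1,\dots,Y_n$ i.i.d. random variables uniformly distributed on $\{1,\dots,d\}$, independent of the $X_i$. Let $X^{(1)}\ge X^{(2)}$ be the largest and second largest values among $X_1,\dots,X_m$ (counted with multiplicity), and similarly $Y^{(1)}\ge Y^{(2)}$ among $Y_1,\dots,Y_n$. Let $P=\Pr\left(X^{(1)}\le Y^{(1)}\text{ and }X^{(2)}\le Y^{(2)}\right)$. If $a\ge d$, then \begin{align*} P&= \sum_{y_1=2}^{d} \sum_{y_2=1}^{y_{1}-1} \frac{n\big(y_2^{n-1}-(y_2-1)^{n-1}\big)\big(m(y_1-y_2)y_{2}^{m-1}+y_{2}^{m} \big)}{a^m d^n}\\ & \quad + \sum_{y_{1}=1}^{d}\frac{\big( y_1^n-(y_1-1)^{n}-n(y_1-1)^{n-1} \big)\, y_{1}^{m}}{a^m d^n}, \end{align*} and if $a\le d$, then \begin{align*} P&= \sum_{y_1=2}^{a} \sum_{y_2=1}^{y_{1}-1} \frac{n\big(y_2^{n-1}-(y_2-1)^{n-1}\big)\big(m(y_1-y_2)y_{2}^{m-1}+y_{2}^{m} \big)}{a^m d^n} \\ & \quad + \sum_{y_{1}=1}^{a}\frac{\big( y_1^n-(y_1-1)^{n}-n(y_1-1)^{n-1} \big)\, y_{1}^{m}}{a^m d^n} \\ & \quad + \sum_{y_{1}=a+1}^d \sum_{y_2=1}^a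 \frac{n\big(y_2^{n-1}-(y_2-1)^{n-1}\big)\big(m(a-y_2)y_{2}^{m-1}+y_{2}^{m} \big)}{a^m d^n} \\ & \quad + \frac{a^m d^n-n(d-a)a^{n+m-1}-a^{m+n}}{a^m d^n}. \end{align*}
   Context: $X^{(i)}$ denotes the $i$-th largest of the dice values (order statistics). In the paper's notation the event is $\{X_i\}_m>_{2,0}\{Y_j\}_n$: none of the comparisons $X^{(1)}>Y^{(1)}$, $X^{(2)}>Y^{(2)}$ holds (ties go to the defender). *)

theory Defs
  imports "HOL-Probability.Probability"
begin

definition kth_largest :: "nat \<Rightarrow> nat \<Rightarrow> (nat \<Rightarrow> nat) \<Rightarrow> nat" where
  "kth_largest k N x = rev (sort (map x [0..<N])) ! (k - 1)"

definition dice :: "nat \<Rightarrow> nat \<Rightarrow> (nat \<Rightarrow> nat) pmf" where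
  "dice N a = Pi_pmf {..<N} 0 (\<lambda>_. pmf_of_set {1..a})"

end

theory Submission
  imports Defs
begin

lemma prob_bind_pmf:
  "measure (measure_pmf (bind_pmf M f)) A = (\<integral>x. measure (measure_pmf (f x)) A \<partial>M)"
  unfolding measure_pmf_bind
  by (subst measure_pmf.measure_bind[where N="count_space UNIV"]) (auto simp: measurable_def measure_subprob)

definition t1 :: "nat list \<Rightarrow> nat" where "t1 xs = rev (sort xs) ! 0"
definition t2 :: "nat list \<Rightarrow> nat" where "t2 xs = rev (sort xs) ! 1"

lemma t1_eq: "xs \<noteq> [] \<Longrightarrow> t1 xs = sort xs ! (length xs - 1)"
  by (simp add: t1_def rev_nth)

lemma t1_le_iff:
  assumes "xs \<noteq> []"
  shows "t1 xs \<le> u \<longleftrightarrow> (\<forall>x\<in>set xs. x \<le> u)"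
proof -
  let ?s = "sort xs" let ?N = "length xs"
  have len: "length ?s = ?N" by simp
  have so: "sorted ?s" by simp
  have e: "t1 xs = ?s ! (?N - 1)" using assms by (simp add: t1_def rev_nth)
  have "(\<forall>x\<in>set xs. x \<le> u) \<longleftrightarrow> (\<forall>x\<in>set ?s. x \<le> u)" by simp
  also have "\<dots> \<longleftrightarrow> (\<forall>i<?N. ?s ! i \<le> u)"
    using len by (simp only: all_set_conv_all_nth)
  also have "\<dots> \<longleftrightarrow> ?s ! (?N - 1) \<le> u"
  proof
    assume "\<forall>i<?N. ?s ! i \<le> u" thus "?s ! (?N - 1) \<le> u" using assms by simp
  next
    assume h: "?s ! (?N - 1) \<le> u"
    show "\<forall>i<?N. ?s ! i \<le> u"
    proof (intro allI impI)
      fix i assume "i < ?N"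
      hence "?s ! i \<le> ?s ! (?N - 1)" using so by (intro sorted_nth_mono) auto
      thus "?s ! i \<le> u" using h by simp
    qed
  qed
  finally show ?thesis using e by simp
qed

lemma t2_le_iff:
  assumes "length xs \<ge> 2"
  shows "t2 xs \<le> v \<longleftrightarrow> length (filter (\<lambda>x. v < x) xs) \<le> 1"
proof -
  let ?s = "sort xs" let ?N = "length xs"
  have so: "sorted ?s" by simp
  have e: "t2 xs = ?s ! (?N - 2)" using assms by (simp add: t2_def rev_nth numeral_2_eq_2)
  have "length (filter (\<lambda>x. v < x) xs) = length (filter (\<lambda>x. v < x) ?s)"
    by (simp add: filter_sort)
  also have "\<dots> = card {i. i < ?N \<and> v < ?s ! i}"
    by (simp add: length_filter_conv_card)
  finally have c: "length (filter (\<lambda>x. v < x) xs) = card {i. i < ?N \<and> v < ?s ! i}" .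
  show ?thesis
  proof
    assume h: "t2 xs \<le> v"
    have "{i. i < ?N \<and> v < ?s ! i} \<subseteq> {?N - 1}"
    proof
      fix i assume i: "i \<in> {i. i < ?N \<and> v < ?s ! i}"
      show "i \<in> {?N - 1}"
      proof (rule ccontr)
        assume "i \<notin> {?N - 1}"
        hence "i \<le> ?N - 2" using i by auto
        hence "?s ! i \<le> ?s ! (?N - 2)" using so assms by (intro sorted_nth_mono) auto
        thus False using i h e by simp
      qed
    qed
    hence "card {i. i < ?N \<and> v < ?s ! i} \<le> card {?N - 1}"
      by (intro card_mono) auto
    hence "card {i. i < ?N \<and> v < ?s ! i} \<le> 1" by simp
    thus "length (filter (\<lambda>x. v < x) xs) \<le> 1" using c by simp
  next
    assume h: "length (filter (\<lambda>x. v < x) xs) \<le> 1"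
    show "t2 xs \<le> v"
    proof (rule ccontr)
      assume "\<not> t2 xs \<le> v"
      hence v1: "v < ?s ! (?N - 2)" using e by simp
      have "?s ! (?N - 2) \<le> ?s ! (?N - 1)" using so assms by (intro sorted_nth_mono) auto
      hence "{?N - 2, ?N - 1} \<subseteq> {i. i < ?N \<and> v < ?s ! i}" using v1 assms by auto
      hence "card {?N - 2, ?N - 1} \<le> card {i. i < ?N \<and> v < ?s ! i}"
        by (intro card_mono) auto
      moreover have "card {?N - 2, ?N - 1} = 2" using assms by simp
      ultimately show False using h c by simp
    qed
  qed
qed

lemma t2_le_t1:
  assumes "length xs \<ge> 2"
  shows "t2 xs \<le> t1 xs"
proof -
  let ?s = "sort xs" let ?N = "length xs"
  have "t2 xs = ?s ! (?N - 2)" using assms by (simp add: t2_def rev_nth numeral_2_eq_2)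
  moreover have "t1 xs = ?s ! (?N - 1)" using assms by (intro t1_eq) auto
  moreover have "?s ! (?N - 2) \<le> ?s ! (?N - 1)" by (intro sorted_nth_mono) (use assms in auto)
  ultimately show ?thesis by simp
qed

definition LP :: "nat \<Rightarrow> nat \<Rightarrow> nat list pmf" where
  "LP N d = map_pmf (\<lambda>f. map f [0..<N]) (dice N d)"

lemma LP_0: "LP 0 d = return_pmf []"
  by (simp add: LP_def map_pmf_const)

lemma LP_Suc: "LP (Suc N) d = bind_pmf (pmf_of_set {1..d}) (\<lambda>c. map_pmf (\<lambda>xs. xs @ [c]) (LP N d))"
proof -
  have m: "map (f(N:=y)) [0..<Suc N] = map f [0..<N] @ [y]" for f :: "nat \<Rightarrow> nat" and y by simp
  show ?thesis
    unfolding LP_def dice_def lessThan_Suc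
    by (simp add: Pi_pmf_insert' map_bind_pmf m pmf.map_comp o_def bind_return_pmf map_pmf_def bind_assoc_pmf)
qed

lemma set_LP: "d \<ge> 1 \<Longrightarrow> xs \<in> set_pmf (LP N d) \<Longrightarrow> length xs = N \<and> (\<forall>x\<in>set xs. 1 \<le> x \<and> x \<le> d)"
proof (induction N arbitrary: xs)
  case 0 thus ?case by (simp add: LP_0)
next
  case (Suc N)
  from Suc.prems obtain c ys where "c \<in> {1..d}" "ys \<in> set_pmf (LP N d)" "xs = ys @ [c]"
    by (auto simp: LP_Suc set_pmf_of_set)
  thus ?case using Suc.IH[of ys] Suc.prems by auto
qed

lemma sum_if_cnt:
  assumes "finite S"
  shows "(\<Sum>c\<in>S. if P c then A else 0) = real (card {c\<in>S. P c}) * (A::real)"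
proof -
  have "(\<Sum>c\<in>S. if P c then A else 0) = (\<Sum>c\<in>S \<inter> {c. P c}. A)"
    using assms by (simp add: sum.If_cases)
  moreover have "S \<inter> {c. P c} = {c\<in>S. P c}" by auto
  ultimately show ?thesis by simp
qed

lemma card_le_v: "v \<le> d \<Longrightarrow> card {c\<in>{1..d::nat}. c \<le> v} = v"
proof -
  assume "v \<le> d"
  hence "{c\<in>{1..d::nat}. c \<le> v} = {1..v}" by auto
  thus ?thesis by simp
qed

lemma card_btw: "u \<le> d \<Longrightarrow> card {c\<in>{1..d::nat}. v < c \<and> c \<le> u} = u - v"
proof -
  assume "u \<le> d"
  hence "{c\<in>{1..d::nat}. v < c \<and> c \<le> u} = {v+1..u}" by auto
  thus ?thesis by simp
qed

lemma prob_LP_Suc: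
  assumes "d \<ge> 1"
  shows "measure (measure_pmf (LP (Suc N) d)) E
     = (\<Sum>c\<in>{1..d}. measure (measure_pmf (LP N d)) {xs. xs @ [c] \<in> E}) / real d"
  using assms by (simp add: LP_Suc prob_bind_pmf integral_pmf_of_set vimage_def)

lemma prob_all_le:
  assumes "d \<ge> 1" "v \<le> d"
  shows "measure (measure_pmf (LP N d)) {xs. \<forall>x\<in>set xs. x \<le> v} = (real v / real d) ^ N"
proof (induction N)
  case 0 thus ?case by (simp add: LP_0)
next
  case (Suc N)
  let ?E = "{xs. \<forall>x\<in>set xs. x \<le> v}"
  have "measure (measure_pmf (LP N d)) {xs. xs @ [c] \<in> ?E}
        = (if c \<le> v then measure (measure_pmf (LP N d)) ?E else 0)" for c
    by auto
  hence "measure (measure_pmf (LP (Suc N) d)) ?E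
       = (\<Sum>c\<in>{1..d}. if c \<le> v then measure (measure_pmf (LP N d)) ?E else 0) / real d"
    using prob_LP_Suc[OF assms(1)] by simp
  also have "\<dots> = real v * (real v / real d) ^ N / real d"
    by (simp only: sum_if_cnt[OF finite_atLeastAtMost] card_le_v[OF assms(2)] Suc)
  finally show ?case using assms by (simp add: field_simps)
qed

lemma prob_Q:
  assumes "d \<ge> 1" "v \<le> u" "u \<le> d"
  shows "measure (measure_pmf (LP N d)) {xs. (\<forall>x\<in>set xs. x \<le> u) \<and> length (filter (\<lambda>x. v < x) xs) \<le> 1}
    = (real v ^ N + real N * (real u - real v) * real v ^ (N - 1)) / real d ^ N"
proof (induction N)
  case 0 thus ?case by (simp add: LP_0)
next
  case (Suc N)
  let ?E = "{xs. (\<forall>x\<in>set xs. x \<le> u) \<and> length (filter (\<lambda>x. v < x) xs) \<le> 1}"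
  let ?F = "{xs. \<forall>x\<in>set xs. x \<le> v}"
  let ?M = "measure (measure_pmf (LP N d))"
  have "?M {xs. xs @ [c] \<in> ?E}
        = (if c \<le> v then ?M ?E else 0) + (if v < c \<and> c \<le> u then ?M ?F else 0)" for c
  proof (cases "c \<le> v")
    case True
    hence "{xs. xs @ [c] \<in> ?E} = ?E" using assms by auto
    thus ?thesis using True by simp
  next
    case False
    show ?thesis
    proof (cases "c \<le> u")
      case True
      have "{xs. xs @ [c] \<in> ?E} = ?F"
        using True False assms by (auto simp: filter_empty_conv)
      thus ?thesis using True False by simp
    next
      case F2: False
      have "{xs. xs @ [c] \<in> ?E} = {}" using F2 by auto
      thus ?thesis using F2 False by simp
    qed
  qed
  hence "measure (measure_pmf (LP (Suc N) d)) ?E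
       = ((\<Sum>c\<in>{1..d}. if c \<le> v then ?M ?E else 0) + (\<Sum>c\<in>{1..d}. if v < c \<and> c \<le> u then ?M ?F else 0)) / real d"
    using prob_LP_Suc[OF assms(1)] by (simp add: sum.distrib)
  also have "\<dots> = (real v * ?M ?E + real (u - v) * ?M ?F) / real d"
    by (simp only: sum_if_cnt finite_atLeastAtMost card_le_v card_btw assms order.trans[OF assms(2,3)])
  also have "\<dots> = (real v * ((real v ^ N + real N * (real u - real v) * real v ^ (N - 1)) / real d ^ N)
                     + (real u - real v) * (real v / real d) ^ N) / real d"
    using Suc prob_all_le[OF assms(1) order.trans[OF assms(2,3)]] assms by (simp add: of_nat_diff)
  also have "\<dots> = (real v ^ Suc N + real (Suc N) * (real u - real v) * real v ^ (Suc N - 1)) / real d ^ Suc N"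
  proof (cases N)
    case 0 thus ?thesis by (simp add: field_simps)
  next
    case (Suc k)
    thus ?thesis using assms by (simp add: field_simps power_divide)
  qed
  finally show ?case .
qed

lemma measure_eq_on_support:
  "A \<inter> set_pmf p = B \<inter> set_pmf p \<Longrightarrow> measure (measure_pmf p) A = measure (measure_pmf p) B"
proof -
  assume h: "A \<inter> set_pmf p = B \<inter> set_pmf p"
  have "measure (measure_pmf p) A = measure (measure_pmf p) (A \<inter> set_pmf p)"
    by (rule measure_Int_set_pmf[symmetric])
  also have "\<dots> = measure (measure_pmf p) (B \<inter> set_pmf p)" using h by simp
  also have "\<dots> = measure (measure_pmf p) B" by (rule measure_Int_set_pmf)
  finally show ?thesis .
qed

definition Qf :: "nat \<Rightarrow> nat \<Rightarrow> nat \<Rightarrow> nat \<Rightarrow> real" where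
  "Qf N d u v = (real v ^ N + real N * (real u - real v) * real v ^ (N - 1)) / real d ^ N"

lemma prob_A:
  assumes "d \<ge> 1" "N \<ge> 2" "v \<le> u"
  shows "measure (measure_pmf (LP N d)) {xs. t1 xs \<le> u \<and> t2 xs \<le> v} = Qf N d (min u d) (min v d)"
proof -
  let ?E = "{xs. (\<forall>x\<in>set xs. x \<le> min u d) \<and> length (filter (\<lambda>x. min v d < x) xs) \<le> 1}"
  have "{xs. t1 xs \<le> u \<and> t2 xs \<le> v} \<inter> set_pmf (LP N d) = ?E \<inter> set_pmf (LP N d)"
  proof (intro equalityI subsetI)
    fix xs assume h: "xs \<in> {xs. t1 xs \<le> u \<and> t2 xs \<le> v} \<inter> set_pmf (LP N d)"
    hence s: "length xs = N" "\<forall>x\<in>set xs. 1 \<le> x \<and> x \<le> d" using set_LP[OF assms(1)] by auto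
    hence ne: "xs \<noteq> []" "length xs \<ge> 2" using assms by auto
    have "t2 xs \<le> min v d"
      using h s t2_le_t1[OF ne(2)] t1_le_iff[OF ne(1), of d] by auto
    thus "xs \<in> ?E \<inter> set_pmf (LP N d)"
      using h s t1_le_iff[OF ne(1)] t2_le_iff[OF ne(2)] by auto
  next
    fix xs assume h: "xs \<in> ?E \<inter> set_pmf (LP N d)"
    hence s: "length xs = N" "\<forall>x\<in>set xs. 1 \<le> x \<and> x \<le> d" using set_LP[OF assms(1)] by auto
    hence ne: "xs \<noteq> []" "length xs \<ge> 2" using assms by auto
    have "length (filter (\<lambda>x. min v d < x) xs) \<le> 1" using h by auto
    hence "t2 xs \<le> min v d" using t2_le_iff[OF ne(2)] by blast
    thus "xs \<in> {xs. t1 xs \<le> u \<and> t2 xs \<le> v} \<inter> set_pmf (LP N d)"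
      using h s t1_le_iff[OF ne(1)] by auto
  qed
  hence "measure (measure_pmf (LP N d)) {xs. t1 xs \<le> u \<and> t2 xs \<le> v} = measure (measure_pmf (LP N d)) ?E"
    by (rule measure_eq_on_support)
  also have "\<dots> = Qf N d (min u d) (min v d)"
    unfolding Qf_def using assms by (intro prob_Q) auto
  finally show ?thesis .
qed

lemma prob_A':
  assumes "d \<ge> 1" "N \<ge> 2" "v \<le> u" "u \<le> d"
  shows "measure (measure_pmf (LP N d)) {xs. t1 xs \<le> u \<and> t2 xs \<le> v} = Qf N d u v"
  using prob_A[OF assms(1-3)] assms by (simp add: min_def)

lemma pmf_T_off:
  assumes "d \<ge> 1" "N \<ge> 2" "1 \<le> y2" "y2 < y1" "y1 \<le> d"
  shows "measure (measure_pmf (LP N d)) {ys. t1 ys = y1 \<and> t2 ys = y2}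
       = real N * (real y2 ^ (N - 1) - (real y2 - 1) ^ (N - 1)) / real d ^ N"
proof -
  define A where "A u v = {xs. t1 xs \<le> u \<and> t2 xs \<le> v}" for u v
  let ?M = "measure (measure_pmf (LP N d))"
  have e: "{ys. t1 ys = y1 \<and> t2 ys = y2} = A y1 y2 - (A (y1 - 1) y2 \<union> A y1 (y2 - 1))"
    using assms unfolding A_def by auto
  have i: "A y1 (y2 - 1) \<inter> A (y1 - 1) y2 = A (y1 - 1) (y2 - 1)" unfolding A_def by auto
  have "?M {ys. t1 ys = y1 \<and> t2 ys = y2} = ?M (A y1 y2) - ?M (A (y1 - 1) y2 \<union> A y1 (y2 - 1))"
    unfolding e by (rule measure_pmf.finite_measure_Diff) (auto simp: A_def)
  also have "?M (A (y1 - 1) y2 \<union> A y1 (y2 - 1)) = ?M (A (y1 - 1) y2) + ?M (A y1 (y2 - 1) - A (y1 - 1) y2)"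
    by (rule measure_pmf.finite_measure_Union') auto
  also have "?M (A y1 (y2 - 1) - A (y1 - 1) y2) = ?M (A y1 (y2 - 1)) - ?M (A (y1 - 1) (y2 - 1))"
    using measure_pmf.finite_measure_Diff'[where A="A y1 (y2 - 1)" and B="A (y1 - 1) y2"] i by simp
  finally have "?M {ys. t1 ys = y1 \<and> t2 ys = y2} =
     Qf N d y1 y2 - (Qf N d (y1 - 1) y2 + (Qf N d y1 (y2 - 1) - Qf N d (y1 - 1) (y2 - 1)))"
    unfolding A_def using assms by (simp add: prob_A')
  also have "\<dots> = real N * (real y2 ^ (N - 1) - (real y2 - 1) ^ (N - 1)) / real d ^ N"
    using assms unfolding Qf_def by (simp add: of_nat_diff field_simps)
  finally show ?thesis .
qed

lemma pmf_T_diag: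
  assumes "d \<ge> 1" "N \<ge> 2" "1 \<le> y" "y \<le> d"
  shows "measure (measure_pmf (LP N d)) {ys. t1 ys = y \<and> t2 ys = y}
       = (real y ^ N - (real y - 1) ^ N - real N * (real y - 1) ^ (N - 1)) / real d ^ N"
proof -
  define A where "A u v = {xs. t1 xs \<le> u \<and> t2 xs \<le> v}" for u v
  let ?M = "measure (measure_pmf (LP N d))"
  have e: "{ys. t1 ys = y \<and> t2 ys = y} \<inter> set_pmf (LP N d) = (A y y - A y (y - 1)) \<inter> set_pmf (LP N d)"
  proof (intro equalityI subsetI)
    fix xs assume h: "xs \<in> (A y y - A y (y - 1)) \<inter> set_pmf (LP N d)"
    hence "length xs \<ge> 2" using set_LP[OF assms(1)] assms by auto
    thus "xs \<in> {ys. t1 ys = y \<and> t2 ys = y} \<inter> set_pmf (LP N d)"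
      using h t2_le_t1[of xs] unfolding A_def by auto
  qed (use assms in \<open>auto simp: A_def\<close>)
  have "?M {ys. t1 ys = y \<and> t2 ys = y} = ?M (A y y - A y (y - 1))"
    by (rule measure_eq_on_support[OF e])
  also have "\<dots> = ?M (A y y) - ?M (A y (y - 1))"
    by (rule measure_pmf.finite_measure_Diff) (auto simp: A_def)
  also have "\<dots> = Qf N d y y - Qf N d y (y - 1)"
    unfolding A_def using assms by (simp add: prob_A')
  also have "\<dots> = (real y ^ N - (real y - 1) ^ N - real N * (real y - 1) ^ (N - 1)) / real d ^ N"
    using assms unfolding Qf_def by (simp add: of_nat_diff field_simps)
  finally show ?thesis .
qed

definition Dd :: "nat \<Rightarrow> nat \<Rightarrow> nat \<Rightarrow> real" where
  "Dd N d y = (real y ^ N - (real y - 1) ^ N - real N * (real y - 1) ^ (N - 1)) / real d ^ N"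
definition Od :: "nat \<Rightarrow> nat \<Rightarrow> nat \<Rightarrow> real" where
  "Od N d y2 = real N * (real y2 ^ (N - 1) - (real y2 - 1) ^ (N - 1)) / real d ^ N"

lemma exp_T:
  assumes "d \<ge> 1" "N \<ge> 2"
  shows "(\<integral>ys. g (t1 ys) (t2 ys) \<partial>measure_pmf (LP N d))
     = (\<Sum>y1=1..d. Dd N d y1 * g y1 y1 + (\<Sum>y2=1..y1-1. Od N d y2 * g y1 y2))"
proof -
  let ?T = "\<lambda>ys. (t1 ys, t2 ys)"
  let ?S = "SIGMA y1:{1..d}. {1..y1}"
  have supT: "z \<in> ?S" if "z \<in> set_pmf (map_pmf ?T (LP N d))" for z
  proof -
    from that obtain ys where ys: "ys \<in> set_pmf (LP N d)" "z = ?T ys" by auto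
    hence s: "length ys = N" "\<forall>x\<in>set ys. 1 \<le> x \<and> x \<le> d" using set_LP[OF assms(1)] by auto
    hence ne: "ys \<noteq> []" "length ys \<ge> 2" using assms by auto
    have "t1 ys \<le> d" using t1_le_iff[OF ne(1)] s by auto
    moreover have "\<not> t2 ys \<le> 0"
    proof -
      have "filter (\<lambda>x. 0 < x) ys = ys" using s by (intro filter_True) auto
      thus ?thesis using t2_le_iff[OF ne(2), of 0] ne(2) by simp
    qed
    moreover have "t2 ys \<le> t1 ys" using t2_le_t1[OF ne(2)] .
    ultimately show ?thesis using ys by auto
  qed
  have "(\<integral>ys. g (t1 ys) (t2 ys) \<partial>measure_pmf (LP N d))
      = (\<integral>z. case_prod g z \<partial>measure_pmf (map_pmf ?T (LP N d)))" by simp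
  also have "\<dots> = (\<Sum>z\<in>?S. pmf (map_pmf ?T (LP N d)) z *\<^sub>R case_prod g z)"
    by (rule integral_measure_pmf) (simp, erule supT)
  also have "\<dots> = (\<Sum>y1=1..d. \<Sum>y2\<in>{1..y1}. measure (measure_pmf (LP N d)) {ys. t1 ys = y1 \<and> t2 ys = y2} * g y1 y2)"
  proof -
    have "(\<Sum>z\<in>?S. pmf (map_pmf ?T (LP N d)) z *\<^sub>R case_prod g z)
        = (\<Sum>y1=1..d. \<Sum>y2\<in>{1..y1}. pmf (map_pmf ?T (LP N d)) (y1, y2) *\<^sub>R g y1 y2)"
      by (subst sum.Sigma) (auto simp: case_prod_unfold)
    moreover have "pmf (map_pmf ?T (LP N d)) (y1, y2) = measure (measure_pmf (LP N d)) {ys. t1 ys = y1 \<and> t2 ys = y2}" for y1 y2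
      by (simp add: pmf_map vimage_def)
    ultimately show ?thesis by simp
  qed
  also have "\<dots> = (\<Sum>y1=1..d. Dd N d y1 * g y1 y1 + (\<Sum>y2=1..y1-1. Od N d y2 * g y1 y2))"
  proof (rule sum.cong[OF refl])
    fix y1 assume y1: "y1 \<in> {1..d}"
    hence ins: "{1..y1} = insert y1 {1..y1-1}" by auto
    have "(\<Sum>y2\<in>{1..y1}. measure (measure_pmf (LP N d)) {ys. t1 ys = y1 \<and> t2 ys = y2} * g y1 y2)
       = measure (measure_pmf (LP N d)) {ys. t1 ys = y1 \<and> t2 ys = y1} * g y1 y1
         + (\<Sum>y2=1..y1-1. measure (measure_pmf (LP N d)) {ys. t1 ys = y1 \<and> t2 ys = y2} * g y1 y2)"
      by (subst ins, subst sum.insert) auto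
    also have "\<dots> = Dd N d y1 * g y1 y1 + (\<Sum>y2=1..y1-1. Od N d y2 * g y1 y2)"
    proof -
      have "measure (measure_pmf (LP N d)) {ys. t1 ys = y1 \<and> t2 ys = y1} = Dd N d y1"
        unfolding Dd_def using y1 assms by (intro pmf_T_diag) auto
      moreover have "(\<Sum>y2=1..y1-1. measure (measure_pmf (LP N d)) {ys. t1 ys = y1 \<and> t2 ys = y2} * g y1 y2)
                   = (\<Sum>y2=1..y1-1. Od N d y2 * g y1 y2)"
      proof (rule sum.cong[OF refl])
        fix y2 assume "y2 \<in> {1..y1-1}"
        hence "measure (measure_pmf (LP N d)) {ys. t1 ys = y1 \<and> t2 ys = y2} = Od N d y2"
          unfolding Od_def using y1 assms by (intro pmf_T_off) auto
        thus "measure (measure_pmf (LP N d)) {ys. t1 ys = y1 \<and> t2 ys = y2} * g y1 y2 = Od N d y2 * g y1 y2"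
          by simp
      qed
      ultimately show ?thesis by simp
    qed
    finally show "(\<Sum>y2\<in>{1..y1}. measure (measure_pmf (LP N d)) {ys. t1 ys = y1 \<and> t2 ys = y2} * g y1 y2)
       = Dd N d y1 * g y1 y1 + (\<Sum>y2=1..y1-1. Od N d y2 * g y1 y2)" .
  qed
  finally show ?thesis .
qed


lemma pair_swap: "pair_pmf A B = bind_pmf B (\<lambda>y. map_pmf (\<lambda>x. (x, y)) A)"
  unfolding pair_pmf_def map_pmf_def by (subst bind_commute_pmf) (rule refl)

lemma split_range:
  fixes a d :: nat
  assumes "a \<le> d"
  shows "(\<Sum>y=1..d. f y) = (\<Sum>y=1..a. f y) + (\<Sum>y=a+1..d. (f y :: real))"
proof -
  have "{1..d} = {1..a} \<union> {a+1..d}" using assms by auto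
  moreover have "{1..a} \<inter> {a+1..d} = {}" by auto
  ultimately show ?thesis by (simp add: sum.union_disjoint)
qed

lemma sum_shift2:
  fixes k :: nat
  shows "(\<Sum>y1=1..k. \<Sum>y2=1..y1-1. h y1 y2) = (\<Sum>y1=2..k. \<Sum>y2=1..y1-1. (h y1 y2 :: real))"
proof (cases "k = 0")
  case True thus ?thesis by simp
next
  case False
  hence "(\<Sum>y1=1..k. \<Sum>y2=1..y1-1. h y1 y2) = (\<Sum>y2=1..1-1. h 1 y2) + (\<Sum>y1=Suc 1..k. \<Sum>y2=1..y1-1. h y1 y2)"
    by (subst sum.atLeast_Suc_atMost) auto
  thus ?thesis by (simp add: numeral_2_eq_2)
qed

lemma exp_split:
  fixes a d :: nat
  assumes "a \<le> d"
  shows "(\<Sum>y1=1..d. D y1 * g y1 y1 + (\<Sum>y2=1..y1-1. Ov y2 * g y1 y2))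
    = (\<Sum>y1=1..a. D y1 * g y1 y1 + (\<Sum>y2=1..y1-1. Ov y2 * g y1 y2))
      + (\<Sum>y1=a+1..d. \<Sum>y2=1..a. Ov y2 * g y1 y2)
      + (\<Sum>y1=a+1..d. D y1 * g y1 y1 + (\<Sum>y2=a+1..y1-1. Ov y2 * (g y1 y2 :: real)))"
proof -
  have "(\<Sum>y1=a+1..d. D y1 * g y1 y1 + (\<Sum>y2=1..y1-1. Ov y2 * g y1 y2))
      = (\<Sum>y1=a+1..d. (\<Sum>y2=1..a. Ov y2 * g y1 y2) + (D y1 * g y1 y1 + (\<Sum>y2=a+1..y1-1. Ov y2 * g y1 y2)))"
  proof (rule sum.cong[OF refl])
    fix y1 assume "y1 \<in> {a+1..d}"
    hence "a \<le> y1 - 1" by auto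
    from split_range[OF this, of "\<lambda>y2. Ov y2 * g y1 y2"]
    show "D y1 * g y1 y1 + (\<Sum>y2=1..y1-1. Ov y2 * g y1 y2)
       = (\<Sum>y2=1..a. Ov y2 * g y1 y2) + (D y1 * g y1 y1 + (\<Sum>y2=a+1..y1-1. Ov y2 * g y1 y2))" by simp
  qed
  thus ?thesis using split_range[OF assms, of "\<lambda>y1. D y1 * g y1 y1 + (\<Sum>y2=1..y1-1. Ov y2 * g y1 y2)"]
    by (simp add: sum.distrib)
qed

lemma piece1:
  assumes "k \<le> a" "a \<ge> 1" "d \<ge> 1"
  shows "(\<Sum>y1=1..k. Dd n d y1 * Qf m a y1 y1 + (\<Sum>y2=1..y1-1. Od n d y2 * Qf m a y1 y2))
   = (\<Sum>y1=2..k. \<Sum>y2=1..y1-1.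
                  real n * (real y2 ^ (n-1) - (real y2 - 1) ^ (n-1))
                  * (real m * (real y1 - real y2) * real y2 ^ (m-1) + real y2 ^ m)
                  / (real a ^ m * real d ^ n))
             + (\<Sum>y1=1..k. (real y1 ^ n - (real y1 - 1) ^ n - real n * (real y1 - 1) ^ (n-1))
                  * real y1 ^ m / (real a ^ m * real d ^ n))"
proof -
  have ad: "real a ^ m \<noteq> 0" "real d ^ n \<noteq> 0" using assms by auto
  have "(\<Sum>y1=1..k. Dd n d y1 * Qf m a y1 y1 + (\<Sum>y2=1..y1-1. Od n d y2 * Qf m a y1 y2))
     = (\<Sum>y1=1..k. Dd n d y1 * Qf m a y1 y1) + (\<Sum>y1=1..k. \<Sum>y2=1..y1-1. Od n d y2 * Qf m a y1 y2)"
    by (simp add: sum.distrib)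
  also have "(\<Sum>y1=1..k. \<Sum>y2=1..y1-1. Od n d y2 * Qf m a y1 y2)
     = (\<Sum>y1=2..k. \<Sum>y2=1..y1-1. Od n d y2 * Qf m a y1 y2)" by (rule sum_shift2)
  also have "\<dots> = (\<Sum>y1=2..k. \<Sum>y2=1..y1-1.
                  real n * (real y2 ^ (n-1) - (real y2 - 1) ^ (n-1))
                  * (real m * (real y1 - real y2) * real y2 ^ (m-1) + real y2 ^ m)
                  / (real a ^ m * real d ^ n))"
    by (intro sum.cong refl) (simp add: Od_def Qf_def ad field_simps)
  also have "(\<Sum>y1=1..k. Dd n d y1 * Qf m a y1 y1) = (\<Sum>y1=1..k. (real y1 ^ n - (real y1 - 1) ^ n - real n * (real y1 - 1) ^ (n-1))
                  * real y1 ^ m / (real a ^ m * real d ^ n))"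
    by (intro sum.cong refl) (simp add: Dd_def Qf_def ad field_simps)
  finally show ?thesis by simp
qed

theorem proposition6p4:
  fixes a d m n :: nat
  assumes "a \<ge> 1" and "d \<ge> 1" and "m \<ge> 2" and "n \<ge> 2"
  defines "P \<equiv> measure_pmf.prob (pair_pmf (dice m a) (dice n d))
             {(X, Y). kth_largest 1 m X \<le> kth_largest 1 n Y \<and> kth_largest 2 m X \<le> kth_largest 2 n Y}"
  shows "(a \<ge> d \<longrightarrow>
           P = (\<Sum>y1=2..d. \<Sum>y2=1..y1-1.
                  real n * (real y2 ^ (n-1) - (real y2 - 1) ^ (n-1))
                  * (real m * (real y1 - real y2) * real y2 ^ (m-1) + real y2 ^ m)
                  / (real a ^ m * real d ^ n))
             + (\<Sum>y1=1..d. (real y1 ^ n - (real y1 - 1) ^ n - real n * (real y1 - 1) ^ (n-1))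
                  * real y1 ^ m / (real a ^ m * real d ^ n)))
       \<and> (a \<le> d \<longrightarrow>
           P = (\<Sum>y1=2..a. \<Sum>y2=1..y1-1.
                  real n * (real y2 ^ (n-1) - (real y2 - 1) ^ (n-1))
                  * (real m * (real y1 - real y2) * real y2 ^ (m-1) + real y2 ^ m)
                  / (real a ^ m * real d ^ n))
             + (\<Sum>y1=1..a. (real y1 ^ n - (real y1 - 1) ^ n - real n * (real y1 - 1) ^ (n-1))
                  * real y1 ^ m / (real a ^ m * real d ^ n))
             + (\<Sum>y1=a+1..d. \<Sum>y2=1..a.
                  real n * (real y2 ^ (n-1) - (real y2 - 1) ^ (n-1))
                  * (real m * (real a - real y2) * real y2 ^ (m-1) + real y2 ^ m)
                  / (real a ^ m * real d ^ n))
             + (real a ^ m * real d ^ n - real n * (real d - real a) * real a ^ (n+m-1) - real a ^ (m+n))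
                  / (real a ^ m * real d ^ n))"
proof -
  have ad: "real a ^ m \<noteq> 0" "real d ^ n \<noteq> 0" using assms by auto
  define G where "G y1 y2 = Qf m a (min y1 a) (min y2 a)" for y1 y2
  define E' where "E' = {(xs, ys). t1 xs \<le> t1 ys \<and> t2 xs \<le> t2 (ys :: nat list)}"
  have "P = measure (measure_pmf (map_pmf (\<lambda>(X, Y). (map X [0..<m], map Y [0..<n])) (pair_pmf (dice m a) (dice n d)))) E'"
    unfolding P_def measure_map_pmf
    by (rule arg_cong[where f="measure (measure_pmf _)"]) (auto simp: E'_def kth_largest_def t1_def t2_def)
  also have "\<dots> = measure (measure_pmf (pair_pmf (LP m a) (LP n d))) E'"
    by (simp only: map_pair LP_def)
  also have "\<dots> = (\<integral>ys. measure (measure_pmf (LP m a)) {xs. t1 xs \<le> t1 ys \<and> t2 xs \<le> t2 ys} \<partial>measure_pmf (LP n d))"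
    by (simp add: pair_swap prob_bind_pmf vimage_def E'_def)
  also have "\<dots> = (\<integral>ys. G (t1 ys) (t2 ys) \<partial>measure_pmf (LP n d))"
  proof (rule integral_cong_AE)
    show "AE ys in measure_pmf (LP n d).
       measure (measure_pmf (LP m a)) {xs. t1 xs \<le> t1 ys \<and> t2 xs \<le> t2 ys} = G (t1 ys) (t2 ys)"
    proof (rule AE_pmfI)
      fix ys assume "ys \<in> set_pmf (LP n d)"
      hence "length ys \<ge> 2" using set_LP[OF assms(2)] assms(4) by auto
      hence "t2 ys \<le> t1 ys" by (rule t2_le_t1)
      thus "measure (measure_pmf (LP m a)) {xs. t1 xs \<le> t1 ys \<and> t2 xs \<le> t2 ys} = G (t1 ys) (t2 ys)"
        unfolding G_def using assms by (intro prob_A) auto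
    qed
  qed auto
  also have "\<dots> = (\<Sum>y1=1..d. Dd n d y1 * G y1 y1 + (\<Sum>y2=1..y1-1. Od n d y2 * G y1 y2))"
    using assms by (intro exp_T) auto
  finally have PE: "P = (\<Sum>y1=1..d. Dd n d y1 * G y1 y1 + (\<Sum>y2=1..y1-1. Od n d y2 * G y1 y2))" .
  show ?thesis
  proof (intro conjI impI)
    assume da: "d \<le> a"
    have "P = (\<Sum>y1=1..d. Dd n d y1 * Qf m a y1 y1 + (\<Sum>y2=1..y1-1. Od n d y2 * Qf m a y1 y2))"
      unfolding PE using da by (intro sum.cong refl arg_cong2[where f="(+)"]) (auto simp: G_def min_def)
    thus "P = (\<Sum>y1=2..d. \<Sum>y2=1..y1-1.
                  real n * (real y2 ^ (n-1) - (real y2 - 1) ^ (n-1))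
                  * (real m * (real y1 - real y2) * real y2 ^ (m-1) + real y2 ^ m)
                  / (real a ^ m * real d ^ n))
             + (\<Sum>y1=1..d. (real y1 ^ n - (real y1 - 1) ^ n - real n * (real y1 - 1) ^ (n-1))
                  * real y1 ^ m / (real a ^ m * real d ^ n))"
      using piece1[OF da assms(1,2)] by simp
  next
    assume ad': "a \<le> d"
    define S1 where "S1 = (\<Sum>y1=1..a. Dd n d y1 * 1 + (\<Sum>y2=1..y1-1. Od n d y2 * 1))"
    define S2 where "S2 = (\<Sum>y1=a+1..d. \<Sum>y2=1..a. Od n d y2 * 1)"
    define R where "R = (\<Sum>y1=a+1..d. Dd n d y1 * 1 + (\<Sum>y2=a+1..y1-1. Od n d y2 * 1))"
    have one: "1 = S1 + S2 + R"
    proof -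
      have "(1::real) = (\<integral>ys. (\<lambda>_ _. 1::real) (t1 ys) (t2 ys) \<partial>measure_pmf (LP n d))" by simp
      also have "\<dots> = (\<Sum>y1=1..d. Dd n d y1 * 1 + (\<Sum>y2=1..y1-1. Od n d y2 * 1))"
        using exp_T[OF assms(2,4), of "\<lambda>_ _. 1::real"] by simp
      also have "\<dots> = S1 + S2 + R"
        unfolding S1_def S2_def R_def by (rule exp_split[OF ad'])
      finally show ?thesis .
    qed
    let ?ind = "\<lambda>(y1::nat) (y2::nat). if y2 \<le> a then 1 else (0::real)"
    have two: "Qf n d d a = S1 + S2"
    proof -
      have "Qf n d d a = measure (measure_pmf (LP n d)) {ys. t1 ys \<le> d \<and> t2 ys \<le> a}"
        using assms ad' by (intro prob_A'[symmetric]) auto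
      also have "\<dots> = measure (measure_pmf (LP n d)) {ys. t2 ys \<le> a}"
      proof (rule measure_eq_on_support)
        show "{ys. t1 ys \<le> d \<and> t2 ys \<le> a} \<inter> set_pmf (LP n d) = {ys. t2 ys \<le> a} \<inter> set_pmf (LP n d)"
        proof (intro equalityI subsetI)
          fix ys assume h: "ys \<in> {ys. t2 ys \<le> a} \<inter> set_pmf (LP n d)"
          hence s: "length ys = n" "\<forall>x\<in>set ys. 1 \<le> x \<and> x \<le> d" using set_LP[OF assms(2)] by auto
          hence "ys \<noteq> []" using assms by auto
          hence "t1 ys \<le> d" using t1_le_iff s by auto
          thus "ys \<in> {ys. t1 ys \<le> d \<and> t2 ys \<le> a} \<inter> set_pmf (LP n d)" using h by auto
        qed auto
      qed
      also have "\<dots> = (\<integral>ys. indicator {ys. t2 ys \<le> a} ys \<partial>measure_pmf (LP n d))"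
        by simp
      also have "\<dots> = (\<integral>ys. ?ind (t1 ys) (t2 ys) \<partial>measure_pmf (LP n d))"
        by (intro Bochner_Integration.integral_cong refl) (auto simp: indicator_def)
      also have "\<dots> = (\<Sum>y1=1..d. Dd n d y1 * ?ind y1 y1 + (\<Sum>y2=1..y1-1. Od n d y2 * ?ind y1 y2))"
        by (rule exp_T[OF assms(2,4)])
      also have "\<dots> = (\<Sum>y1=1..a. Dd n d y1 * ?ind y1 y1 + (\<Sum>y2=1..y1-1. Od n d y2 * ?ind y1 y2))
      + (\<Sum>y1=a+1..d. \<Sum>y2=1..a. Od n d y2 * ?ind y1 y2)
      + (\<Sum>y1=a+1..d. Dd n d y1 * ?ind y1 y1 + (\<Sum>y2=a+1..y1-1. Od n d y2 * ?ind y1 y2))"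
        by (rule exp_split[OF ad'])
      also have "(\<Sum>y1=1..a. Dd n d y1 * ?ind y1 y1 + (\<Sum>y2=1..y1-1. Od n d y2 * ?ind y1 y2)) = S1"
        unfolding S1_def by (intro sum.cong refl arg_cong2[where f="(+)"]) auto
      also have "(\<Sum>y1=a+1..d. \<Sum>y2=1..a. Od n d y2 * ?ind y1 y2) = S2"
        unfolding S2_def by (intro sum.cong refl) auto
      also have "(\<Sum>y1=a+1..d. Dd n d y1 * ?ind y1 y1 + (\<Sum>y2=a+1..y1-1. Od n d y2 * ?ind y1 y2)) = 0"
        by (intro sum.neutral ballI) auto
      finally show ?thesis by simp
    qed
    have "P = (\<Sum>y1=1..a. Dd n d y1 * G y1 y1 + (\<Sum>y2=1..y1-1. Od n d y2 * G y1 y2))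
      + (\<Sum>y1=a+1..d. \<Sum>y2=1..a. Od n d y2 * G y1 y2)
      + (\<Sum>y1=a+1..d. Dd n d y1 * G y1 y1 + (\<Sum>y2=a+1..y1-1. Od n d y2 * G y1 y2))"
      unfolding PE by (rule exp_split[OF ad'])
    also have "(\<Sum>y1=1..a. Dd n d y1 * G y1 y1 + (\<Sum>y2=1..y1-1. Od n d y2 * G y1 y2))
        = (\<Sum>y1=1..a. Dd n d y1 * Qf m a y1 y1 + (\<Sum>y2=1..y1-1. Od n d y2 * Qf m a y1 y2))"
      by (intro sum.cong refl arg_cong2[where f="(+)"]) (auto simp: G_def min_def)
    also have "(\<Sum>y1=a+1..d. \<Sum>y2=1..a. Od n d y2 * G y1 y2)
        = (\<Sum>y1=a+1..d. \<Sum>y2=1..a.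
                  real n * (real y2 ^ (n-1) - (real y2 - 1) ^ (n-1))
                  * (real m * (real a - real y2) * real y2 ^ (m-1) + real y2 ^ m)
                  / (real a ^ m * real d ^ n))"
      by (intro sum.cong refl) (auto simp: G_def min_def Od_def Qf_def ad field_simps)
    also have "(\<Sum>y1=a+1..d. Dd n d y1 * G y1 y1 + (\<Sum>y2=a+1..y1-1. Od n d y2 * G y1 y2)) = R"
    proof -
      have "Qf m a a a = 1" using ad by (simp add: Qf_def)
      thus ?thesis unfolding R_def by (intro sum.cong refl arg_cong2[where f="(+)"]) (auto simp: G_def min_def)
    qed
    also have "R = 1 - Qf n d d a" using one two by simp
    also have "\<dots> = (real a ^ m * real d ^ n - real n * (real d - real a) * real a ^ (n+m-1) - real a ^ (m+n))
                  / (real a ^ m * real d ^ n)"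
    proof -
      have e1: "real a ^ (n+m-1) = real a ^ (n-1) * real a ^ m"
        using assms by (simp add: power_add[symmetric])
      have e2: "real a ^ (m+n) = real a ^ n * real a ^ m" by (simp add: power_add)
      show ?thesis unfolding Qf_def e1 e2 using ad by (simp add: field_simps)
    qed
    finally show "P = (\<Sum>y1=2..a. \<Sum>y2=1..y1-1.
                  real n * (real y2 ^ (n-1) - (real y2 - 1) ^ (n-1))
                  * (real m * (real y1 - real y2) * real y2 ^ (m-1) + real y2 ^ m)
                  / (real a ^ m * real d ^ n))
             + (\<Sum>y1=1..a. (real y1 ^ n - (real y1 - 1) ^ n - real n * (real y1 - 1) ^ (n-1))
                  * real y1 ^ m / (real a ^ m * real d ^ n))
             + (\<Sum>y1=a+1..d. \<Sum>y2=1..a.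
                  real n * (real y2 ^ (n-1) - (real y2 - 1) ^ (n-1))
                  * (real m * (real a - real y2) * real y2 ^ (m-1) + real y2 ^ m)
                  / (real a ^ m * real d ^ n))
             + (real a ^ m * real d ^ n - real n * (real d - real a) * real a ^ (n+m-1) - real a ^ (m+n))
                  / (real a ^ m * real d ^ n)"
      using piece1[OF order.refl assms(1,2)] by simp
  qed
qed

end
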